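(* Let $\mathbf b^{(1)}=(b_5^{-1},b_6^{-1},b_7^{-1},b_8^{-1},b_1^{-1},b_2^{-1},b_3^{-1},b_4^{-1})$. Then, as identities of formal series in $t$ whose coefficients are Laurent series in $\phi$, $$f^{0,+}(t,\phi;\Lambda,\mathbf b)\,f^{0,+}\!\Big(t,\frac1{t\phi};\frac1\Lambda,\mathbf b^{(1)}\Big)=t,\qquad g^{0,+}(t,\phi;\Lambda,\mathbf b)\,g^{0,+}\!\Big(t,\frac1{t\phi};\frac1\Lambda,\mathbf b^{(1)}\Big)=t,$$ where $f^{0,+}(t,\psi;\Lambda',\mathbf b')=\sum_{n\ge1}\sum_{i\le n}F^{0,+}_{n,i}(\Lambda',\mathbf b')\psi^it^n$ (similarly for $g^{0,+}$), and the substitution $\psi=1/(t\phi)$ is made termwise (the coefficient of each $t^m$ is then a Laurent series in $\phi$ with exponents $\le m-1$).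
   Context: Parameters $\mathbf b=(b_1,\dots,b_8)\in(\mathbb C^* )^8$, $q=\frac{b_1b_2b_3b_4}{b_5b_6b_7b_8}$ (note $q(\mathbf b^{(1)})=q(\mathbf b)$). The equation $q$-$P(A_1)$ for $f=f(t)$, $g=g(t)$ is $$(gf-t^2)(g\bar f-qt^2)(g-b_5)(g-b_6)(g-b_7)(g-b_8)=(gf-1)(g\bar f-1)(g-b_1t)(g-b_2t)(g-b_3t)(g-b_4t),$$ $$(g\bar f-qt^2)(\bar g\bar f-q^2t^2)(\bar f-b_5^{-1})(\bar f-b_6^{-1})(\bar f-b_7^{-1})(\bar f-b_8^{-1})=(g\bar f-1)(\bar g\bar f-1)(\bar f-b_1^{-1}qt)(\bar f-b_2^{-1}qt)(\bar f-b_3^{-1}qt)(\bar f-b_4^{-1}qt).$$ Formal setting: $\Lambda,\phi$ are indeterminates, $\lambda=\Lambda^2/(b_1b_2b_3b_4)$; formal solutions are pairs $f=\sum_{n\ge1}\sum_{i\le n}F_{n,i}\phi^it^n$, $g=\sum_{n\ge1}\sum_{i\le n}G_{n,i}\phi^it^n$ with coefficients rational in $(\Lambda,\mathbf b)$ satisfying both equations identically under the shift $t\mapsto qt$, $\phi\mapsto\lambda\phi$, $\Lambda\mapsto\Lambda$. $(f^{0,+}(t,\phi;\Lambda,\mathbf b),g^{0,+}(t,\phi;\Lambda,\mathbf b))$ denotes the unique such solution with $F_{1,1}=1$, $G_{1,1}=\Lambda$, with coefficients $F^{0,+}_{n,i}(\Lambda,\mathbf b),G^{0,+}_{n,i}(\Lambda,\mathbf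 b)$. *)

theory Defs
  imports "HOL-Computational_Algebra.Formal_Power_Series" "HOL-Computational_Algebra.Formal_Laurent_Series"
begin

text \<open>
  A formal double series  sum_n sum_i c(n,i) phi^i t^n  (i ranging over the integers,
  bounded above for each n) is represented as an element of  ('a fls) fps :
  the coefficient of t^n is a formal Laurent series in the variable u = 1/phi,
  so the coefficient of phi^i t^n is  fls_nth (f $ n) (-i).
  The parameters b_1,...,b_8 are  b 1, ..., b 8  (values of b at other indices are irrelevant).
  The coefficient field is an arbitrary field 'a (in the paper: rational functions in Lambda, b).
\<close>

definition coef :: "('a::zero) fls fps \<Rightarrow> nat \<Rightarrow> int \<Rightarrow> 'a" where
  "coef f n i = fls_nth (f $ n) (- i)"

definition qpar :: "(nat \<Rightarrow> 'a::field) \<Rightarrow> 'a" where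
  "qpar b = (b 1 * b 2 * b 3 * b 4) / (b 5 * b 6 * b 7 * b 8)"

definition lampar :: "'a::field \<Rightarrow> (nat \<Rightarrow> 'a) \<Rightarrow> 'a" where
  "lampar \<Lambda> b = \<Lambda>^2 / (b 1 * b 2 * b 3 * b 4)"

definition bdual :: "(nat \<Rightarrow> 'a::field) \<Rightarrow> nat \<Rightarrow> 'a" where
  "bdual b i = (if 1 \<le> i \<and> i \<le> 4 then inverse (b (i + 4))
                else if 5 \<le> i \<and> i \<le> 8 then inverse (b (i - 4)) else 0)"

definition admissible :: "('a::zero) fls fps \<Rightarrow> bool" where
  "admissible f \<longleftrightarrow> f $ 0 = 0 \<and> (\<forall>n i. coef f n i \<noteq> 0 \<longrightarrow> i \<le> int n)"

text \<open>The shift t -> q t, phi -> l phi (Lambda fixed): phi^i t^n gets the factor l^i q^n.\<close>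
definition tshift :: "'a::field \<Rightarrow> 'a \<Rightarrow> 'a fls fps \<Rightarrow> 'a fls fps" where
  "tshift q l f = Abs_fps (\<lambda>n. Abs_fls (\<lambda>k. q ^ n * l powi (- k) * fls_nth (f $ n) k))"

definition cst :: "'a::field \<Rightarrow> 'a fls fps" where
  "cst c = fps_const (fls_const c)"

definition qPA1 :: "'a::field \<Rightarrow> (nat \<Rightarrow> 'a) \<Rightarrow> 'a fls fps \<Rightarrow> 'a fls fps \<Rightarrow> bool" where
  "qPA1 \<Lambda> b f g \<longleftrightarrow>
     (let q = qpar b; l = lampar \<Lambda> b; t = (fps_X :: 'a fls fps);
          fb = tshift q l f; gb = tshift q l g in
      (g * f - t^2) * (g * fb - cst q * t^2)
        * (g - cst (b 5)) * (g - cst (b 6)) * (g - cst (b 7)) * (g - cst (b 8))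
      = (g * f - 1) * (g * fb - 1)
        * (g - cst (b 1) * t) * (g - cst (b 2) * t) * (g - cst (b 3) * t) * (g - cst (b 4) * t)
      \<and>
      (g * fb - cst q * t^2) * (gb * fb - cst (q^2) * t^2)
        * (fb - cst (inverse (b 5))) * (fb - cst (inverse (b 6)))
        * (fb - cst (inverse (b 7))) * (fb - cst (inverse (b 8)))
      = (g * fb - 1) * (gb * fb - 1)
        * (fb - cst (inverse (b 1) * q) * t) * (fb - cst (inverse (b 2) * q) * t)
        * (fb - cst (inverse (b 3) * q) * t) * (fb - cst (inverse (b 4) * q) * t))"

definition sol0plus :: "'a::field \<Rightarrow> (nat \<Rightarrow> 'a) \<Rightarrow> 'a fls fps \<times> 'a fls fps \<Rightarrow> bool" where
  "sol0plus \<Lambda> b p \<longleftrightarrow> admissible (fst p) \<and> admissible (snd p) \<and> qPA1 \<Lambda> b (fst p) (snd p)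
      \<and> coef (fst p) 1 1 = 1 \<and> coef (snd p) 1 1 = \<Lambda>"

definition f0plus :: "'a::field \<Rightarrow> (nat \<Rightarrow> 'a) \<Rightarrow> 'a fls fps" where
  "f0plus \<Lambda> b = fst (THE p. sol0plus \<Lambda> b p)"

definition g0plus :: "'a::field \<Rightarrow> (nat \<Rightarrow> 'a) \<Rightarrow> 'a fls fps" where
  "g0plus \<Lambda> b = snd (THE p. sol0plus \<Lambda> b p)"

text \<open>Termwise substitution psi = 1/(t phi):  c(n,i) psi^i t^n  becomes  c(n,i) phi^(-i) t^(n-i).
  Hence the coefficient of t^m phi^(-k) (i.e. of t^m u^k) is c(m+k, k).\<close>
definition subst_inv :: "('a::zero) fls fps \<Rightarrow> 'a fls fps" where
  "subst_inv f = Abs_fps (\<lambda>m. Abs_fls (\<lambda>k. if int m + k \<ge> 0 then coef f (nat (int m + k)) k else 0))"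

end

theory Submission
  imports Defs
begin
unbundle fps_syntax



lemma fls_mult_window:
  fixes x y :: "'a::field fls"
  assumes "\<And>k. k < a \<Longrightarrow> x $$ k = 0" "\<And>k. k < b \<Longrightarrow> y $$ k = 0"
  shows "(x*y) $$ n = (\<Sum>i=a..n-b. x $$ i * y $$ (n-i))"
proof (cases "x = 0 \<or> y = 0")
  case True thus ?thesis by auto
next
  case False
  hence sa: "a \<le> fls_subdegree x" and sb: "b \<le> fls_subdegree y"
    using assms by (auto intro: fls_subdegree_geI)
  have "(x*y) $$ n = (\<Sum>i=fls_subdegree x..n - fls_subdegree y. x $$ i * y $$ (n - i))"
    by (rule fls_times_nth(2))
  also have "\<dots> = (\<Sum>i=a..n-b. x $$ i * y $$ (n-i))"
    by (rule sum.mono_neutral_left) (use sa sb in auto)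
  finally show ?thesis .
qed

lemma fls_mult_zero_below:
  fixes x y :: "'a::field fls"
  assumes "\<And>k. k < a \<Longrightarrow> x $$ k = 0" "\<And>k. k < b \<Longrightarrow> y $$ k = 0" "n < a + b"
  shows "(x*y) $$ n = 0"
  using fls_mult_window[of a x b y n, OF assms(1) assms(2)] assms(3) by simp

definition lowb :: "int \<Rightarrow> 'a::zero fls fps \<Rightarrow> bool" where
  "lowb d h \<longleftrightarrow> (\<forall>n k. k < d - int n \<longrightarrow> h $ n $$ k = 0)"

lemma lowbD: "lowb d h \<Longrightarrow> k < d - int n \<Longrightarrow> h $ n $$ k = 0"
  unfolding lowb_def by blast

lemma lowb_mult:
  fixes f g :: "'a::field fls fps"
  assumes "lowb a f" "lowb b g" shows "lowb (a+b) (f*g)"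
  unfolding lowb_def
proof (intro allI impI)
  fix n k assume k: "k < a + b - int n"
  have "(f*g) $ n $$ k = (\<Sum>i=0..n. (f$i * g$(n-i)) $$ k)"
    by (simp add: fps_mult_nth fls_nth_sum)
  also have "\<dots> = 0"
  proof (rule sum.neutral, intro ballI)
    fix i assume i: "i \<in> {0..n}"
    show "(f$i * g$(n-i)) $$ k = 0"
      by (rule fls_mult_zero_below[of "a - int i" _ "b - int (n-i)"])
         (use assms i k in \<open>auto intro: lowbD\<close>)
  qed
  finally show "(f*g) $ n $$ k = 0" .
qed

lemma lowb0_mult [simp]: "lowb 0 f \<Longrightarrow> lowb 0 g \<Longrightarrow> lowb 0 (f*(g::'a::field fls fps))"
  using lowb_mult[of 0 f 0 g] by simp

lemma lowb0_power [simp]: "lowb 0 f \<Longrightarrow> lowb 0 (f^n :: 'a::field fls fps)"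
proof (induction n)
  case 0 show ?case by (auto simp: lowb_def fps_one_nth)
next
  case (Suc n) thus ?case by (simp add: power_Suc)
qed

lemma lowb_diff [simp]: "lowb d f \<Longrightarrow> lowb d g \<Longrightarrow> lowb d (f - (g::'a::field fls fps))"
  by (auto simp: lowb_def)

lemma lowb_cst [simp]: "lowb 0 (cst c)"
  by (auto simp: lowb_def cst_def)

lemma lowb_X [simp]: "lowb 0 (fps_X :: 'a::field fls fps)"
  by (auto simp: lowb_def fps_X_def)

lemma lowb_mono: "lowb d h \<Longrightarrow> d' \<le> d \<Longrightarrow> lowb d' h"
  by (auto simp: lowb_def)

lemma admissible_lowb: "admissible f \<Longrightarrow> lowb 0 f"
  unfolding admissible_def lowb_def coef_def
  by (metis add.inverse_inverse diff_0 neg_less_iff_less not_less)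




lemma Abs_fls_nth_scaled:
  "Abs_fls (\<lambda>k. c k * x $$ k) $$ n = c n * (x::'a::field fls) $$ n"
  by (rule nth_Abs_fls_lower_bound[of "fls_subdegree x"]) auto

lemma tshift_nth: "tshift q l f $ n $$ k = q ^ n * l powi (- k) * f $ n $$ k"
proof -
  have "tshift q l f $ n = Abs_fls (\<lambda>k. (q ^ n * l powi (- k)) * f $ n $$ k)"
    by (simp add: tshift_def mult.assoc)
  thus ?thesis by (simp add: Abs_fls_nth_scaled)
qed

lemma sc_mult:
  fixes x y :: "'a::field fls"
  assumes l: "l \<noteq> 0"
  shows "Abs_fls (\<lambda>k. l powi (-k) * (x*y) $$ k)
       = Abs_fls (\<lambda>k. l powi (-k) * x $$ k) * Abs_fls (\<lambda>k. l powi (-k) * y $$ k)"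
proof (rule fls_eqI)
  fix n
  let ?a = "fls_subdegree x" and ?b = "fls_subdegree y"
  have "(Abs_fls (\<lambda>k. l powi (-k) * x $$ k) * Abs_fls (\<lambda>k. l powi (-k) * y $$ k)) $$ n
      = (\<Sum>i=?a..n-?b. (l powi (-i) * x $$ i) * (l powi (-(n-i)) * y $$ (n-i)))"
    by (subst fls_mult_window[of ?a _ ?b]) (auto simp: Abs_fls_nth_scaled)
  also have "\<dots> = (\<Sum>i=?a..n-?b. l powi (-n) * (x $$ i * y $$ (n-i)))"
  proof (rule sum.cong[OF refl])
    fix i
    have "l powi (-i) * l powi (-(n-i)) = l powi (-n)"
      using l by (simp add: power_int_add[symmetric])
    thus "(l powi (-i) * x $$ i) * (l powi (-(n-i)) * y $$ (n-i)) = l powi (-n) * (x $$ i * y $$ (n-i))"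
      by (metis (no_types, lifting) mult.assoc mult.left_commute)
  qed
  also have "\<dots> = l powi (-n) * (x*y) $$ n"
    by (simp add: sum_distrib_left fls_mult_window[of ?a _ ?b])
  finally show "Abs_fls (\<lambda>k. l powi (-k) * (x*y) $$ k) $$ n
      = (Abs_fls (\<lambda>k. l powi (-k) * x $$ k) * Abs_fls (\<lambda>k. l powi (-k) * y $$ k)) $$ n"
    by (simp add: Abs_fls_nth_scaled)
qed

lemma tshift_alt: "tshift q l f $ n = fls_const (q^n) * Abs_fls (\<lambda>k. l powi (-k) * f $ n $$ k)"
  by (rule fls_eqI) (simp add: tshift_nth Abs_fls_nth_scaled mult.assoc)

lemma tshift_mult:
  fixes f g :: "'a::field fls fps"
  assumes l: "l \<noteq> 0"
  shows "tshift q l (f*g) = tshift q l f * tshift q l g"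
proof (rule fps_ext)
  fix n
  define sc where "sc x = Abs_fls (\<lambda>k. l powi (-k) * x $$ k)" for x :: "'a fls"
  have tm: "tshift q l f $ i * tshift q l g $ (n-i) = fls_const (q^n) * sc (f$i * g$(n-i))"
    if "i \<in> {0..n}" for i
  proof -
    have "tshift q l f $ i * tshift q l g $ (n-i) = (fls_const (q^i) * fls_const (q^(n-i))) * (sc (f$i) * sc (g$(n-i)))"
      unfolding tshift_alt sc_def by (simp add: ac_simps)
    also have "\<dots> = fls_const (q^n) * sc (f$i * g$(n-i))"
      using that l by (simp add: sc_def sc_mult fls_const_mult_const power_add[symmetric])
    finally show ?thesis .
  qed
  show "tshift q l (f*g) $ n = (tshift q l f * tshift q l g) $ n"
  proof (rule fls_eqI)
    fix k
    have "(tshift q l f * tshift q l g) $ n $$ k = (\<Sum>i=0..n. (fls_const (q^n) * sc (f$i * g$(n-i))) $$ k)"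
      unfolding fps_mult_nth fls_nth_sum using tm by (intro sum.cong) auto
    also have "\<dots> = (\<Sum>i=0..n. q^n * l powi (-k) * (f$i * g$(n-i)) $$ k)"
      by (simp add: sc_def Abs_fls_nth_scaled mult.assoc)
    also have "\<dots> = tshift q l (f*g) $ n $$ k"
      by (simp add: tshift_nth fps_mult_nth fls_nth_sum sum_distrib_left)
    finally show "tshift q l (f*g) $ n $$ k = (tshift q l f * tshift q l g) $ n $$ k" by simp
  qed
qed

lemma tshift_diff: "tshift q l (f - g) = tshift q l f - tshift q l (g::'a::field fls fps)"
  by (intro fps_ext fls_eqI) (simp add: tshift_nth algebra_simps)

lemma tshift_cst: "tshift q l (cst c) = (cst c :: 'a::field fls fps)"
  by (intro fps_ext fls_eqI) (simp add: tshift_nth cst_def)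

lemma tshift_X: "tshift q l (fps_X :: 'a::field fls fps) = cst q * fps_X"
  by (intro fps_ext fls_eqI) (simp add: tshift_nth cst_def fps_X_def)

lemma tshift_one: "tshift q l (1 :: 'a::field fls fps) = 1"
  using tshift_cst[of q l 1] by (simp add: cst_def)

lemma tshift_power: "l \<noteq> 0 \<Longrightarrow> tshift q l (f ^ n) = tshift q l (f::'a::field fls fps) ^ n"
  by (induction n) (simp_all add: tshift_one tshift_mult)

lemma lowb_tshift: "lowb d f \<Longrightarrow> lowb d (tshift q l f)"
  by (simp add: lowb_def tshift_nth)




definition Dm :: "'a::field fls fps \<Rightarrow> 'a fls fps" where
  "Dm h = Abs_fps (\<lambda>n. fls_shift (- int n) (h$n))"
definition Di :: "'a::field fls fps \<Rightarrow> 'a fls fps" where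
  "Di h = Abs_fps (\<lambda>n. fls_shift (int n) (h$n))"
definition sw :: "'a::field fls fps \<Rightarrow> 'a fls fps" where
  "sw h = Abs_fps (\<lambda>m. Abs_fls (\<lambda>j. if 0 \<le> j then h $ nat j $$ int m else 0))"

lemma sw_nth: "sw h $ m $$ j = (if 0 \<le> j then h $ nat j $$ int m else 0)"
  unfolding sw_def by (simp add: nth_Abs_fls_lower_bound[of 0])

lemma subst_inv_nth: "subst_inv h $ m $$ k = (if 0 \<le> int m + k then h $ nat (int m + k) $$ (-k) else 0)"
  unfolding subst_inv_def coef_def by (simp add: nth_Abs_fls_lower_bound[of "- int m"])

lemma subst_inv_eq: "subst_inv h = Di (sw (Dm h))"
  by (intro fps_ext fls_eqI) (simp add: subst_inv_nth Di_def Dm_def sw_nth algebra_simps)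

lemma fls_shift_sum: "fls_shift m (\<Sum>i\<in>A. f i) = (\<Sum>i\<in>A. fls_shift m (f i))"
  by (intro fls_eqI) (simp add: fls_nth_sum)

lemma fls_shift_mult2: "fls_shift a x * fls_shift b y = fls_shift (a+b) (x * (y::'a::field fls))"
  by (simp add: fls_shifted_times_simps add.commute)

lemma Dm_mult: "Dm (f*g) = Dm f * Dm g"
proof (rule fps_ext)
  fix n
  have "Dm (f*g) $ n = (\<Sum>i=0..n. fls_shift (- int n) (f$i * g$(n-i)))"
    by (simp add: Dm_def fps_mult_nth fls_shift_sum)
  also have "\<dots> = (\<Sum>i=0..n. fls_shift (- int i) (f$i) * fls_shift (- int (n-i)) (g$(n-i)))"
    by (intro sum.cong) (auto simp: fls_shift_mult2 of_nat_diff)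
  finally show "Dm (f*g) $ n = (Dm f * Dm g) $ n" by (simp add: Dm_def fps_mult_nth)
qed

lemma Di_mult: "Di (f*g) = Di f * Di g"
proof (rule fps_ext)
  fix n
  have "Di (f*g) $ n = (\<Sum>i=0..n. fls_shift (int n) (f$i * g$(n-i)))"
    by (simp add: Di_def fps_mult_nth fls_shift_sum)
  also have "\<dots> = (\<Sum>i=0..n. fls_shift (int i) (f$i) * fls_shift (int (n-i)) (g$(n-i)))"
    by (intro sum.cong) (auto simp: fls_shift_mult2 of_nat_diff)
  finally show "Di (f*g) $ n = (Di f * Di g) $ n" by (simp add: Di_def fps_mult_nth)
qed

lemma fls_mult_nat_window:
  fixes x y :: "'a::field fls"
  assumes "\<And>k. k < 0 \<Longrightarrow> x $$ k = 0" "\<And>k. k < 0 \<Longrightarrow> y $$ k = 0"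
  shows "(x*y) $$ int N = (\<Sum>i\<le>N. x $$ int i * y $$ int (N-i))"
proof -
  have "(x*y) $$ int N = (\<Sum>i=0..int N. x $$ i * y $$ (int N - i))"
    using fls_mult_window[of 0 x 0 y "int N", OF assms] by simp
  also have "{0..int N} = int ` {..N}"
  proof (auto simp: image_iff)
    fix x :: int assume "0 \<le> x" "x \<le> int N"
    thus "\<exists>y\<in>{..N}. x = int y" by (intro bexI[of _ "nat x"]) auto
  qed
  also have "(\<Sum>i\<in>int ` {..N}. x $$ i * y $$ (int N - i)) = (\<Sum>i\<le>N. x $$ int i * y $$ int (N-i))"
    by (subst sum.reindex) (auto simp: of_nat_diff)
  finally show ?thesis .
qed

definition nonneg :: "'a::zero fls fps \<Rightarrow> bool" where
  "nonneg h \<longleftrightarrow> (\<forall>n k. k < 0 \<longrightarrow> h $ n $$ k = 0)"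

lemma nonneg_Dm: "lowb 0 h \<Longrightarrow> nonneg (Dm h)"
  by (auto simp: nonneg_def Dm_def lowb_def)

lemma sw_mult:
  fixes f g :: "'a::field fls fps"
  assumes f: "nonneg f" and g: "nonneg g"
  shows "sw (f*g) = sw f * sw g"
proof (intro fps_ext fls_eqI)
  fix m j
  have aux: "\<And>J i::nat. nat (int J - int i) = J - i" by simp
  have swz: "\<And>h i k. k < 0 \<Longrightarrow> sw h $ i $$ k = 0" by (simp add: sw_nth)
  have fz: "\<And>i k. k < 0 \<Longrightarrow> f $ i $$ k = 0" and gz: "\<And>i k. k < 0 \<Longrightarrow> g $ i $$ k = 0"
    using f g by (auto simp: nonneg_def)
  show "sw (f*g) $ m $$ j = (sw f * sw g) $ m $$ j"
  proof (cases "0 \<le> j")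
    case False
    thus ?thesis by (simp add: sw_nth fps_mult_nth fls_nth_sum fls_mult_zero_below[of 0 _ 0] swz)
  next
    case True
    then obtain J where J: "j = int J" by (metis nonneg_eq_int)
    have "sw (f*g) $ m $$ j = (\<Sum>c\<le>J. (f$c * g$(J-c)) $$ int m)"
      by (simp add: sw_nth J fps_mult_nth fls_nth_sum atMost_atLeast0)
    also have "\<dots> = (\<Sum>c\<le>J. \<Sum>a\<le>m. f$c $$ int a * g$(J-c) $$ int (m-a))"
      by (intro sum.cong refl fls_mult_nat_window fz gz)
    also have "\<dots> = (\<Sum>a\<le>m. \<Sum>c\<le>J. f$c $$ int a * g$(J-c) $$ int (m-a))"
      by (rule sum.swap)
    also have "\<dots> = (\<Sum>a\<le>m. (sw f $ a * sw g $ (m-a)) $$ j)"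
      by (intro sum.cong refl, subst J, subst fls_mult_nat_window) (auto simp: swz sw_nth aux intro!: sum.cong)
    also have "\<dots> = (sw f * sw g) $ m $$ j"
      by (simp add: fps_mult_nth fls_nth_sum atMost_atLeast0)
    finally show ?thesis .
  qed
qed

lemma subst_inv_mult:
  fixes f g :: "'a::field fls fps"
  assumes "lowb 0 f" "lowb 0 g"
  shows "subst_inv (f*g) = subst_inv f * subst_inv g"
  unfolding subst_inv_eq Dm_mult using assms
  by (simp add: sw_mult nonneg_Dm Di_mult)

lemma subst_inv_diff: "subst_inv (f - g) = subst_inv f - subst_inv (g::'a::field fls fps)"
  by (intro fps_ext fls_eqI) (simp add: subst_inv_nth)

lemma subst_inv_cst: "subst_inv (cst c) = (cst c::'a::field fls fps)"
  by (intro fps_ext fls_eqI) (auto simp: subst_inv_nth cst_def)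

lemma subst_inv_X: "subst_inv fps_X = (fps_X::'a::field fls fps)"
  by (intro fps_ext fls_eqI) (auto simp: subst_inv_nth fps_X_def)

lemma subst_inv_one: "subst_inv 1 = (1::'a::field fls fps)"
  using subst_inv_cst[of 1] by (simp add: cst_def)

lemma subst_inv_power: "lowb 0 f \<Longrightarrow> subst_inv (f^n) = subst_inv (f::'a::field fls fps) ^ n"
  by (induction n) (simp_all add: subst_inv_one subst_inv_mult)




lemma subst_inv_tshift:
  fixes h :: "'a::field fls fps"
  assumes q: "q \<noteq> 0" and l': "l' \<noteq> 0" and l: "l = inverse (q * l')"
  shows "subst_inv (tshift q l' h) = tshift q l (subst_inv h)"
proof (intro fps_ext fls_eqI)
  fix m k
  show "subst_inv (tshift q l' h) $ m $$ k = tshift q l (subst_inv h) $ m $$ k"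
  proof (cases "0 \<le> int m + k")
    case True
    have e1: "q ^ nat (int m + k) = q ^ m * q powi k"
      using True q by (metis power_int_add power_int_of_nat int_nat_eq power_int_def of_nat_0_le_iff)
    have e2: "l powi (-k) = q powi k * l' powi k"
      unfolding l using q l' by (simp add: power_int_minus power_int_inverse power_int_mult_distrib)
    show ?thesis using True by (simp add: subst_inv_nth tshift_nth e1 e2)
  next
    case False thus ?thesis by (simp add: subst_inv_nth tshift_nth)
  qed
qed

lemma inv_admissible:
  fixes F H :: "'a::field fls fps"
  assumes FH: "F * H = fps_X" and F1: "lowb 1 F" and F01: "F $ 0 $$ 1 \<noteq> 0"
  shows "admissible H"
proof -
  have F0: "F $ 0 \<noteq> 0" using F01 by auto
  have sd: "fls_subdegree (F $ 0) = 1"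
    by (rule fls_subdegree_eqI[OF F01]) (use F1 in \<open>auto simp: lowb_def\<close>)
  have main: "\<forall>k < - int n. H $ n $$ k = 0" for n
  proof (induction n rule: less_induct)
    case (less n)
    have "fps_X $ n = (F*H) $ n" using FH by simp
    also have "\<dots> = F$0 * H$n + (\<Sum>i=Suc 0..n. F$i * H$(n-i))"
      unfolding fps_mult_nth by (simp add: sum.atLeast_Suc_atMost)
    finally have eq: "F$0 * H$n = fps_X $ n - (\<Sum>i=Suc 0..n. F$i * H$(n-i))" by (simp add: algebra_simps)
    have z: "(F$0 * H$n) $$ k = 0" if k: "k < 1 - int n" for k
    proof -
      have "(fps_X $ n :: 'a fls) $$ k = 0" using k by (auto simp: fps_X_def)
      moreover have "(F$i * H$(n-i)) $$ k = 0" if i: "i \<in> {Suc 0..n}" for i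
      proof (rule fls_mult_zero_below[of "1 - int i" _ "- int (n-i)"])
        show "\<And>k. k < 1 - int i \<Longrightarrow> F $ i $$ k = 0" using F1 by (auto simp: lowb_def)
        show "\<And>k. k < - int (n - i) \<Longrightarrow> H $ (n - i) $$ k = 0" using less.IH[of "n-i"] i by auto
        show "k < 1 - int i + - int (n - i)" using k i by auto
      qed
      ultimately show ?thesis by (simp add: eq fls_nth_sum)
    qed
    show ?case
    proof (intro allI impI)
      fix k assume k: "k < - int n"
      show "H $ n $$ k = 0"
      proof (cases "H $ n = 0")
        case False
        have "F$0 * H$n \<noteq> 0" using False F0 by simp
        hence "(F$0 * H$n) $$ fls_subdegree (F$0 * H$n) \<noteq> 0" by (rule nth_fls_subdegree_nonzero)
        hence "\<not> fls_subdegree (F$0 * H$n) < 1 - int n" using z by auto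
        hence "- int n \<le> fls_subdegree (H$n)" using False F0 sd by simp
        thus ?thesis using k by simp
      qed simp
    qed
  qed
  have H0: "H $ 0 = 0"
  proof -
    have "F$0 * H$0 = 0" using arg_cong[OF FH, of "\<lambda>x. x $ 0"] by simp
    thus ?thesis using F0 by simp
  qed
  show ?thesis unfolding admissible_def coef_def
  proof (intro conjI H0 allI impI)
    fix n i assume "H $ n $$ - i \<noteq> 0"
    thus "i \<le> int n" using main[of n] by (meson neg_less_iff_less not_le)
  qed
qed

lemma subst_adm_lowb1: "admissible f \<Longrightarrow> lowb 1 (subst_inv (f::'a::field fls fps))"
  unfolding lowb_def
proof (intro allI impI)
  fix n k assume a: "admissible f" and k: "k < 1 - int n"
  show "subst_inv f $ n $$ k = 0"
  proof (cases "int n + k = 0")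
    case True
    hence "nat (int n + k) = 0" by simp
    thus ?thesis using a by (simp add: subst_inv_nth admissible_def)
  next
    case False thus ?thesis using k by (simp add: subst_inv_nth)
  qed
qed

lemma subst_inv_01: "subst_inv f $ 0 $$ 1 = coef f 1 1"
  by (simp add: subst_inv_nth coef_def)

lemma Xinv_coef11:
  fixes F :: "'a::field fls fps"
  assumes F1: "lowb 1 F" and F01: "F $ 0 $$ 1 \<noteq> 0"
  shows "coef (fps_X * inverse F) 1 1 = inverse (F $ 0 $$ 1)"
proof -
  have F0: "F $ 0 \<noteq> 0" using F01 by auto
  have sd: "fls_subdegree (F $ 0) = 1"
    by (rule fls_subdegree_eqI[OF F01]) (use F1 in \<open>auto simp: lowb_def\<close>)
  show ?thesis unfolding coef_def using fls_inverse_base[OF F0] sd by simp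
qed




lemma alg1:
  fixes F G Fb f g fb t q B1 B2 B3 B4 B5 B6 B7 B8 :: "'k::field"
  assumes hf: "F*f = t" and hg: "G*g = t" and hfb: "Fb*fb = q*t" and t: "t \<noteq> 0" and q: "q \<noteq> 0"
    and nz: "B1 \<noteq> 0" "B2 \<noteq> 0" "B3 \<noteq> 0" "B4 \<noteq> 0" "B5 \<noteq> 0" "B6 \<noteq> 0" "B7 \<noteq> 0" "B8 \<noteq> 0"
    and qB: "q*(B5*B6*B7*B8) = B1*B2*B3*B4"
    and E: "(G*F - t^2) * (G*Fb - q*t^2) * (G - inverse B1) * (G - inverse B2) * (G - inverse B3) * (G - inverse B4)
          = (G*F - 1) * (G*Fb - 1) * (G - inverse B5 * t) * (G - inverse B6 * t) * (G - inverse B7 * t) * (G - inverse B8 * t)"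
  shows "(g*f - t^2) * (g*fb - q*t^2) * (g - B5) * (g - B6) * (g - B7) * (g - B8)
       = (g*f - 1) * (g*fb - 1) * (g - B1*t) * (g - B2*t) * (g - B3*t) * (g - B4*t)"
proof -
  have f0: "f \<noteq> 0" using hf t by auto
  have g0: "g \<noteq> 0" using hg t by auto
  have fb0: "fb \<noteq> 0" using hfb t q by auto
  have F: "F = t/f" using hf f0 by (simp add: field_simps)
  have G: "G = t/g" using hg g0 by (simp add: field_simps)
  have Fb: "Fb = q*t/fb" using hfb fb0 by (simp add: field_simps)
  have a1: "G*F - t^2 = t^2*(1 - g*f)/(g*f)" unfolding F G using f0 g0 by (simp add: field_simps power2_eq_square)
  have a2: "G*Fb - q*t^2 = q*t^2*(1 - g*fb)/(g*fb)" unfolding Fb G using fb0 g0 by (simp add: field_simps power2_eq_square)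
  have a3: "\<And>B. B \<noteq> 0 \<Longrightarrow> G - inverse B = - (g - B*t)/(g*B)" unfolding G using g0 by (simp add: field_simps)
  have a4: "G*F - 1 = - (g*f - t^2)/(g*f)" unfolding F G using f0 g0 by (simp add: field_simps power2_eq_square)
  have a5: "G*Fb - 1 = - (g*fb - q*t^2)/(g*fb)" unfolding Fb G using fb0 g0 by (simp add: field_simps power2_eq_square)
  have a6: "\<And>B. B \<noteq> 0 \<Longrightarrow> G - inverse B * t = - t*(g - B)/(g*B)" unfolding G using g0 by (simp add: field_simps)
  define P where "P = (g*f - t^2) * (g*fb - q*t^2) * (g - B5) * (g - B6) * (g - B7) * (g - B8)"
  define Q where "Q = (g*f - 1) * (g*fb - 1) * (g - B1*t) * (g - B2*t) * (g - B3*t) * (g - B4*t)"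
  have "(t^2*(1 - g*f)/(g*f)) * (q*t^2*(1 - g*fb)/(g*fb)) * (- (g - B1*t)/(g*B1)) * (- (g - B2*t)/(g*B2))
        * (- (g - B3*t)/(g*B3)) * (- (g - B4*t)/(g*B4))
      = (- (g*f - t^2)/(g*f)) * (- (g*fb - q*t^2)/(g*fb)) * (- t*(g - B5)/(g*B5)) * (- t*(g - B6)/(g*B6))
        * (- t*(g - B7)/(g*B7)) * (- t*(g - B8)/(g*B8))"
    using E by (simp only: a1 a2 a4 a5 a3[OF nz(1)] a3[OF nz(2)] a3[OF nz(3)] a3[OF nz(4)] a6[OF nz(5)] a6[OF nz(6)] a6[OF nz(7)] a6[OF nz(8)])
  hence "q * t^4 * Q / (g^6*f*fb*(B1*B2*B3*B4)) = t^4 * P / (g^6*f*fb*(B5*B6*B7*B8))"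
    unfolding P_def Q_def by (simp add: field_simps power_def eval_nat_numeral)
  hence "q * (B5*B6*B7*B8) * Q = (B1*B2*B3*B4) * P"
    using f0 g0 fb0 t nz by (simp add: field_simps)
  hence "(B1*B2*B3*B4) * Q = (B1*B2*B3*B4) * P" using qB by simp
  thus ?thesis using nz unfolding P_def Q_def by simp
qed

lemma alg2:
  fixes Gb G Fb gb g fb t q B1 B2 B3 B4 B5 B6 B7 B8 :: "'k::field"
  assumes hg: "G*g = t" and hgb: "Gb*gb = q*t" and hfb: "Fb*fb = q*t" and t: "t \<noteq> 0" and q: "q \<noteq> 0"
    and nz: "B1 \<noteq> 0" "B2 \<noteq> 0" "B3 \<noteq> 0" "B4 \<noteq> 0" "B5 \<noteq> 0" "B6 \<noteq> 0" "B7 \<noteq> 0" "B8 \<noteq> 0"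
    and qB: "q*(B5*B6*B7*B8) = B1*B2*B3*B4"
    and E: "(G*Fb - q*t^2) * (Gb*Fb - q^2*t^2) * (Fb - B1) * (Fb - B2) * (Fb - B3) * (Fb - B4)
          = (G*Fb - 1) * (Gb*Fb - 1) * (Fb - B5*q*t) * (Fb - B6*q*t) * (Fb - B7*q*t) * (Fb - B8*q*t)"
  shows "(g*fb - q*t^2) * (gb*fb - q^2*t^2) * (fb - inverse B5) * (fb - inverse B6) * (fb - inverse B7) * (fb - inverse B8)
       = (g*fb - 1) * (gb*fb - 1) * (fb - inverse B1*q*t) * (fb - inverse B2*q*t) * (fb - inverse B3*q*t) * (fb - inverse B4*q*t)"
proof -
  have gb0: "gb \<noteq> 0" using hgb t q by auto
  have g0: "g \<noteq> 0" using hg t by auto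
  have fb0: "fb \<noteq> 0" using hfb t q by auto
  have Gb: "Gb = q*t/gb" using hgb gb0 by (simp add: field_simps)
  have G: "G = t/g" using hg g0 by (simp add: field_simps)
  have Fb: "Fb = q*t/fb" using hfb fb0 by (simp add: field_simps)
  have a1: "G*Fb - q*t^2 = q*t^2*(1 - g*fb)/(g*fb)" unfolding Fb G using fb0 g0 by (simp add: field_simps power2_eq_square)
  have a2: "Gb*Fb - q^2*t^2 = q^2*t^2*(1 - gb*fb)/(gb*fb)" unfolding Fb Gb using fb0 gb0 by (simp add: field_simps power2_eq_square)
  have a3: "\<And>B. Fb - B = - (B*fb - q*t)/fb" unfolding Fb using fb0 by (simp add: field_simps)
  have a4: "G*Fb - 1 = - (g*fb - q*t^2)/(g*fb)" unfolding Fb G using fb0 g0 by (simp add: field_simps power2_eq_square)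
  have a5: "Gb*Fb - 1 = - (gb*fb - q^2*t^2)/(gb*fb)" unfolding Fb Gb using fb0 gb0 by (simp add: field_simps power2_eq_square)
  have a6: "\<And>B. Fb - B*q*t = - q*t*(B*fb - 1)/fb" unfolding Fb using fb0 by (simp add: field_simps)
  define P where "P = (g*fb - q*t^2) * (gb*fb - q^2*t^2) * (B5*fb - 1) * (B6*fb - 1) * (B7*fb - 1) * (B8*fb - 1)"
  define Q where "Q = (g*fb - 1) * (gb*fb - 1) * (B1*fb - q*t) * (B2*fb - q*t) * (B3*fb - q*t) * (B4*fb - q*t)"
  have "(q*t^2*(1 - g*fb)/(g*fb)) * (q^2*t^2*(1 - gb*fb)/(gb*fb)) * (- (B1*fb - q*t)/fb) * (- (B2*fb - q*t)/fb)
        * (- (B3*fb - q*t)/fb) * (- (B4*fb - q*t)/fb)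
      = (- (g*fb - q*t^2)/(g*fb)) * (- (gb*fb - q^2*t^2)/(gb*fb)) * (- q*t*(B5*fb - 1)/fb) * (- q*t*(B6*fb - 1)/fb)
        * (- q*t*(B7*fb - 1)/fb) * (- q*t*(B8*fb - 1)/fb)"
    using E by (simp only: a1 a2 a4 a5 a6 a3[of B1] a3[of B2] a3[of B3] a3[of B4])
  hence "q^3 * t^4 * Q / (g*gb*fb^6) = q^4 * t^4 * P / (g*gb*fb^6)"
    unfolding P_def Q_def by (simp add: field_simps power_def eval_nat_numeral)
  hence QP: "Q = q * P"
    using gb0 g0 fb0 t q by (simp add: field_simps eval_nat_numeral)
  have i: "\<And>B. B \<noteq> 0 \<Longrightarrow> fb - inverse B = (B*fb - 1)/B" "\<And>B. B \<noteq> 0 \<Longrightarrow> fb - inverse B*q*t = (B*fb - q*t)/B"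
    by (simp_all add: field_simps)
  have "(g*fb - 1) * (gb*fb - 1) * (fb - inverse B1*q*t) * (fb - inverse B2*q*t) * (fb - inverse B3*q*t) * (fb - inverse B4*q*t)
     = Q / (B1*B2*B3*B4)" unfolding Q_def using nz by (simp add: i)
  also have "\<dots> = P / (B5*B6*B7*B8)" using QP qB nz q by (simp add: field_simps)
  also have "\<dots> = (g*fb - q*t^2) * (gb*fb - q^2*t^2) * (fb - inverse B5) * (fb - inverse B6) * (fb - inverse B7) * (fb - inverse B8)"
    unfolding P_def using nz by (simp add: i)
  finally show ?thesis by simp
qed

lemma lowb_one [simp]: "lowb 0 (1::'a::field fls fps)"
  by (auto simp: lowb_def fps_one_nth)

definition K :: "'a::field \<Rightarrow> 'a fls fls" where "K c = fls_const (fls_const c)"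

lemma K_mult: "K (x*y) = K x * K y" by (simp add: K_def)
lemma K_inv: "K (inverse x) = inverse (K x)" by (simp add: K_def fls_inverse_const)
lemma K_pow: "K (x^n) = K x ^ n" by (simp add: K_def fls_const_power)
lemma K_nz: "(K x = 0) = (x = 0)" by (simp add: K_def)
lemma fps_to_fls_cst: "fps_to_fls (cst c) = K c" by (simp add: K_def cst_def)

lemma the_sol:
  assumes "\<exists>!p. sol0plus L b p"
  shows "sol0plus L b (f0plus L b, g0plus L b)"
  using theI'[OF assms] unfolding f0plus_def g0plus_def by simp

theorem mainTheorem6:
  fixes \<Lambda> :: "'a::field" and b :: "nat \<Rightarrow> 'a"
  assumes "\<Lambda> \<noteq> 0"
    and "\<forall>i\<in>{1..8}. b i \<noteq> 0"
    and "\<exists>!p. sol0plus \<Lambda> b p"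
    and "\<exists>!p. sol0plus (inverse \<Lambda>) (bdual b) p"
  shows "f0plus \<Lambda> b * subst_inv (f0plus (inverse \<Lambda>) (bdual b)) = fps_X
         \<and> g0plus \<Lambda> b * subst_inv (g0plus (inverse \<Lambda>) (bdual b)) = fps_X"
proof -
  have b1: "b 1 \<noteq> 0" and b2: "b 2 \<noteq> 0" and b3: "b 3 \<noteq> 0" and b4: "b 4 \<noteq> 0"
   and b5: "b 5 \<noteq> 0" and b6: "b 6 \<noteq> 0" and b7: "b 7 \<noteq> 0" and b8: "b 8 \<noteq> 0"
    using assms(2) by auto
  note bnz = b1 b2 b3 b4 b5 b6 b7 b8
  define fd where "fd = f0plus (inverse \<Lambda>) (bdual b)"
  define gd where "gd = g0plus (inverse \<Lambda>) (bdual b)"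
  have sd: "sol0plus (inverse \<Lambda>) (bdual b) (fd, gd)"
    unfolding fd_def gd_def by (rule the_sol[OF assms(4)])
  define q where "q = qpar b"
  define l where "l = lampar \<Lambda> b"
  define ld where "ld = lampar (inverse \<Lambda>) (bdual b)"
  have bd: "bdual b 1 = inverse (b 5)" "bdual b 2 = inverse (b 6)" "bdual b 3 = inverse (b 7)" "bdual b 4 = inverse (b 8)"
    "bdual b 5 = inverse (b 1)" "bdual b 6 = inverse (b 2)" "bdual b 7 = inverse (b 3)" "bdual b 8 = inverse (b 4)"
    by (simp_all add: bdual_def)
  have qd: "qpar (bdual b) = q" unfolding q_def qpar_def bd using bnz by (simp add: field_simps)
  have q0: "q \<noteq> 0" unfolding q_def qpar_def using bnz by simp
  have l0: "l \<noteq> 0" unfolding l_def lampar_def using bnz assms(1) by simp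
  have ld0: "ld \<noteq> 0" unfolding ld_def lampar_def bd using bnz assms(1) by simp
  have lld: "l = inverse (q * ld)" unfolding l_def ld_def q_def lampar_def qpar_def bd
    using bnz assms(1) by (simp add: field_simps)
  have qB: "q * (b 5 * b 6 * b 7 * b 8) = b 1 * b 2 * b 3 * b 4" unfolding q_def qpar_def using bnz by simp
  have afd: "admissible fd" and agd: "admissible gd" and cfd: "coef fd 1 1 = 1" and cgd: "coef gd 1 1 = inverse \<Lambda>"
   and Ed: "qPA1 (inverse \<Lambda>) (bdual b) fd gd"
    using sd unfolding sol0plus_def by auto
  have lfd: "lowb 0 fd" and lgd: "lowb 0 gd" using afd agd by (auto intro: admissible_lowb)
  define F where "F = subst_inv fd"
  define G where "G = subst_inv gd"
  have F1: "lowb 1 F" and G1: "lowb 1 G" unfolding F_def G_def using afd agd by (auto intro: subst_adm_lowb1)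
  have F01: "F $ 0 $$ 1 = 1" and G01: "G $ 0 $$ 1 = inverse \<Lambda>" unfolding F_def G_def subst_inv_01 using cfd cgd by auto
  have F0: "F $ 0 \<noteq> 0" and G0: "G $ 0 \<noteq> 0" using F01 G01 assms(1) by auto
  define f where "f = fps_X * inverse F"
  define g where "g = fps_X * inverse G"
  have Ff: "F * f = fps_X" unfolding f_def using inverse_mult_eq_1'[OF F0] by (simp add: ac_simps)
  have Gg: "G * g = fps_X" unfolding g_def using inverse_mult_eq_1'[OF G0] by (simp add: ac_simps)
  have af: "admissible f" by (rule inv_admissible[OF Ff F1]) (simp add: F01)
  have ag: "admissible g" by (rule inv_admissible[OF Gg G1]) (use G01 assms(1) in simp)
  have cf: "coef f 1 1 = 1" unfolding f_def using Xinv_coef11[OF F1] F01 by simp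
  have cg: "coef g 1 1 = \<Lambda>" unfolding g_def using Xinv_coef11[OF G1] G01 assms(1) by simp
  have sF: "subst_inv (tshift q ld fd) = tshift q l F" unfolding F_def by (rule subst_inv_tshift[OF q0 ld0 lld])
  have sG: "subst_inv (tshift q ld gd) = tshift q l G" unfolding G_def by (rule subst_inv_tshift[OF q0 ld0 lld])
  have Ffb: "tshift q l F * tshift q l f = cst q * fps_X" using Ff l0 by (metis tshift_mult tshift_X)
  have Ggb: "tshift q l G * tshift q l g = cst q * fps_X" using Gg l0 by (metis tshift_mult tshift_X)
  from Ed have Ed1: "(gd * fd - fps_X^2) * (gd * tshift q ld fd - cst q * fps_X^2)
        * (gd - cst (inverse (b 1))) * (gd - cst (inverse (b 2))) * (gd - cst (inverse (b 3))) * (gd - cst (inverse (b 4)))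
      = (gd * fd - 1) * (gd * tshift q ld fd - 1)
        * (gd - cst (inverse (b 5)) * fps_X) * (gd - cst (inverse (b 6)) * fps_X) * (gd - cst (inverse (b 7)) * fps_X) * (gd - cst (inverse (b 8)) * fps_X)"
   and Ed2: "(gd * tshift q ld fd - cst q * fps_X^2) * (tshift q ld gd * tshift q ld fd - cst (q^2) * fps_X^2)
        * (tshift q ld fd - cst (b 1)) * (tshift q ld fd - cst (b 2))
        * (tshift q ld fd - cst (b 3)) * (tshift q ld fd - cst (b 4))
      = (gd * tshift q ld fd - 1) * (tshift q ld gd * tshift q ld fd - 1)
        * (tshift q ld fd - cst (b 5 * q) * fps_X) * (tshift q ld fd - cst (b 6 * q) * fps_X)
        * (tshift q ld fd - cst (b 7 * q) * fps_X) * (tshift q ld fd - cst (b 8 * q) * fps_X)"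
    unfolding qPA1_def Let_def qd ld_def[symmetric] bd by simp_all
  note sub = subst_inv_mult subst_inv_diff subst_inv_cst subst_inv_X subst_inv_power subst_inv_one lowb_tshift lfd lgd
  have S1: "(G * F - fps_X^2) * (G * tshift q l F - cst q * fps_X^2)
        * (G - cst (inverse (b 1))) * (G - cst (inverse (b 2))) * (G - cst (inverse (b 3))) * (G - cst (inverse (b 4)))
      = (G * F - 1) * (G * tshift q l F - 1)
        * (G - cst (inverse (b 5)) * fps_X) * (G - cst (inverse (b 6)) * fps_X) * (G - cst (inverse (b 7)) * fps_X) * (G - cst (inverse (b 8)) * fps_X)"
    using arg_cong[OF Ed1, of subst_inv] unfolding F_def G_def by (simp add: sub sF[unfolded F_def])
  have S2: "(G * tshift q l F - cst q * fps_X^2) * (tshift q l G * tshift q l F - cst (q^2) * fps_X^2)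
        * (tshift q l F - cst (b 1)) * (tshift q l F - cst (b 2))
        * (tshift q l F - cst (b 3)) * (tshift q l F - cst (b 4))
      = (G * tshift q l F - 1) * (tshift q l G * tshift q l F - 1)
        * (tshift q l F - cst (b 5 * q) * fps_X) * (tshift q l F - cst (b 6 * q) * fps_X)
        * (tshift q l F - cst (b 7 * q) * fps_X) * (tshift q l F - cst (b 8 * q) * fps_X)"
    using arg_cong[OF Ed2, of subst_inv] unfolding F_def G_def by (simp add: sub sF[unfolded F_def] sG[unfolded G_def])
  note hom = fls_times_fps_to_fls fps_to_fls_power fps_to_fls_cst K_inv K_mult K_pow
  have T0: "(fls_X :: 'a fls fls) \<noteq> 0" by simp
  have Q0: "K q \<noteq> 0" using q0 by (simp add: K_nz)
  have Bnz: "K (b 1) \<noteq> 0" "K (b 2) \<noteq> 0" "K (b 3) \<noteq> 0" "K (b 4) \<noteq> 0"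
     "K (b 5) \<noteq> 0" "K (b 6) \<noteq> 0" "K (b 7) \<noteq> 0" "K (b 8) \<noteq> 0" using bnz by (simp_all add: K_nz)
  have KqB: "K q * (K (b 5) * K (b 6) * K (b 7) * K (b 8)) = K (b 1) * K (b 2) * K (b 3) * K (b 4)"
    using arg_cong[OF qB, of K] by (simp add: K_mult)
  have hFf: "fps_to_fls F * fps_to_fls f = fls_X" using arg_cong[OF Ff, of fps_to_fls] by (simp add: hom)
  have hGg: "fps_to_fls G * fps_to_fls g = fls_X" using arg_cong[OF Gg, of fps_to_fls] by (simp add: hom)
  have hFfb: "fps_to_fls (tshift q l F) * fps_to_fls (tshift q l f) = K q * fls_X"
    using arg_cong[OF Ffb, of fps_to_fls] by (simp add: hom)
  have hGgb: "fps_to_fls (tshift q l G) * fps_to_fls (tshift q l g) = K q * fls_X"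
    using arg_cong[OF Ggb, of fps_to_fls] by (simp add: hom)
  have R1: "(fps_to_fls g * fps_to_fls f - fls_X^2) * (fps_to_fls g * fps_to_fls (tshift q l f) - K q * fls_X^2)
      * (fps_to_fls g - K (b 5)) * (fps_to_fls g - K (b 6)) * (fps_to_fls g - K (b 7)) * (fps_to_fls g - K (b 8))
    = (fps_to_fls g * fps_to_fls f - 1) * (fps_to_fls g * fps_to_fls (tshift q l f) - 1)
      * (fps_to_fls g - K (b 1) * fls_X) * (fps_to_fls g - K (b 2) * fls_X) * (fps_to_fls g - K (b 3) * fls_X) * (fps_to_fls g - K (b 4) * fls_X)"
  proof (rule alg1[OF hFf hGg hFfb T0 Q0 Bnz KqB])
    show "(fps_to_fls G * fps_to_fls F - fls_X\<^sup>2) * (fps_to_fls G * fps_to_fls (tshift q l F) - K q * fls_X\<^sup>2) *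
     (fps_to_fls G - inverse (K (b 1))) * (fps_to_fls G - inverse (K (b 2))) * (fps_to_fls G - inverse (K (b 3))) *
     (fps_to_fls G - inverse (K (b 4))) =
     (fps_to_fls G * fps_to_fls F - 1) * (fps_to_fls G * fps_to_fls (tshift q l F) - 1) *
     (fps_to_fls G - inverse (K (b 5)) * fls_X) * (fps_to_fls G - inverse (K (b 6)) * fls_X) *
     (fps_to_fls G - inverse (K (b 7)) * fls_X) * (fps_to_fls G - inverse (K (b 8)) * fls_X)"
      using arg_cong[OF S1, of fps_to_fls] by (simp add: hom)
  qed
  have R2: "(fps_to_fls g * fps_to_fls (tshift q l f) - K q * fls_X^2) * (fps_to_fls (tshift q l g) * fps_to_fls (tshift q l f) - K q^2 * fls_X^2)
      * (fps_to_fls (tshift q l f) - inverse (K (b 5))) * (fps_to_fls (tshift q l f) - inverse (K (b 6)))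
      * (fps_to_fls (tshift q l f) - inverse (K (b 7))) * (fps_to_fls (tshift q l f) - inverse (K (b 8)))
    = (fps_to_fls g * fps_to_fls (tshift q l f) - 1) * (fps_to_fls (tshift q l g) * fps_to_fls (tshift q l f) - 1)
      * (fps_to_fls (tshift q l f) - inverse (K (b 1)) * K q * fls_X) * (fps_to_fls (tshift q l f) - inverse (K (b 2)) * K q * fls_X)
      * (fps_to_fls (tshift q l f) - inverse (K (b 3)) * K q * fls_X) * (fps_to_fls (tshift q l f) - inverse (K (b 4)) * K q * fls_X)"
  proof (rule alg2[OF hGg hGgb hFfb T0 Q0 Bnz KqB])
    show "(fps_to_fls G * fps_to_fls (tshift q l F) - K q * fls_X\<^sup>2) *
     (fps_to_fls (tshift q l G) * fps_to_fls (tshift q l F) - (K q)\<^sup>2 * fls_X\<^sup>2) *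
     (fps_to_fls (tshift q l F) - K (b 1)) * (fps_to_fls (tshift q l F) - K (b 2)) *
     (fps_to_fls (tshift q l F) - K (b 3)) * (fps_to_fls (tshift q l F) - K (b 4)) =
     (fps_to_fls G * fps_to_fls (tshift q l F) - 1) * (fps_to_fls (tshift q l G) * fps_to_fls (tshift q l F) - 1) *
     (fps_to_fls (tshift q l F) - K (b 5) * K q * fls_X) * (fps_to_fls (tshift q l F) - K (b 6) * K q * fls_X) *
     (fps_to_fls (tshift q l F) - K (b 7) * K q * fls_X) * (fps_to_fls (tshift q l F) - K (b 8) * K q * fls_X)"
      using arg_cong[OF S2, of fps_to_fls] by (simp add: hom)
  qed
  have qp: "qPA1 \<Lambda> b f g"
    unfolding qPA1_def Let_def q_def[symmetric] l_def[symmetric]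
  proof
    show "(g * f - fps_X^2) * (g * tshift q l f - cst q * fps_X^2) * (g - cst (b 5)) * (g - cst (b 6)) * (g - cst (b 7)) * (g - cst (b 8))
      = (g * f - 1) * (g * tshift q l f - 1) * (g - cst (b 1) * fps_X) * (g - cst (b 2) * fps_X) * (g - cst (b 3) * fps_X) * (g - cst (b 4) * fps_X)"
      by (subst fps_to_fls_eq_iff[symmetric]) (simp add: hom R1)
    show "(g * tshift q l f - cst q * fps_X^2) * (tshift q l g * tshift q l f - cst (q^2) * fps_X^2)
        * (tshift q l f - cst (inverse (b 5))) * (tshift q l f - cst (inverse (b 6)))
        * (tshift q l f - cst (inverse (b 7))) * (tshift q l f - cst (inverse (b 8)))
      = (g * tshift q l f - 1) * (tshift q l g * tshift q l f - 1)
        * (tshift q l f - cst (inverse (b 1) * q) * fps_X) * (tshift q l f - cst (inverse (b 2) * q) * fps_X)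
        * (tshift q l f - cst (inverse (b 3) * q) * fps_X) * (tshift q l f - cst (inverse (b 4) * q) * fps_X)"
      by (subst fps_to_fls_eq_iff[symmetric]) (simp add: hom R2)
  qed
  have sp: "sol0plus \<Lambda> b (f, g)" unfolding sol0plus_def using af ag qp cf cg by simp
  have "(f0plus \<Lambda> b, g0plus \<Lambda> b) = (f, g)"
    using the_sol[OF assms(3)] sp assms(3) by blast
  hence "f0plus \<Lambda> b = f" "g0plus \<Lambda> b = g" by auto
  thus ?thesis using Ff Gg unfolding F_def G_def fd_def gd_def by (simp add: ac_simps)
qed


end
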